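(* Assume $N\ge K_R$. With the definitions in the context, the value of the optimization problem (P3), i.e. $$\min_{\text{caching realizations}}\ \frac{1}{\pi(N,K_R)}\sum_{\mathbf{d}\in\mathcal{P}_{N,K_R}}H^*\!\left(\{\mathcal{P}_i\}_{i=1}^{K_T},\{\mathcal{Q}_j\}_{j=1}^{K_R},\mathbf{d}\right),$$ the minimum being over caching realizations satisfying the constraints below, is bounded from below by $$\frac{K_R\,N\,F\left(1-\frac{M_R}{N}\right)^2}{K_TM_T+K_RM_R}.$$
   Context: Setting: $K_T$ transmitters, $K_R$ receivers, a library of $N$ files $W_1,\dots,W_N$, each consisting of $F$ packets. A caching realization consists of sets $\mathcal{P}_i$ ($i\in[K_T]$) of packets cached at transmitter $\text{Tx}_i$ and $\mathcal{Q}_j$ ($j\in[K_R]$) of packets cached at receiver $\text{Rx}_j$. For a nonempty $\mathcal{T}\subseteq[K_T]$ and $\mathcal{R}\subseteq[K_R]$, let $a_{n,\mathcal{T},\mathcal{R}}$ be the number of packets of $W_n$ cached exactly at the transmitters in $\mathcal{T}$ and the receivers in $\mathcal{R}$. The constraints on the caching realization are: $\sum_{\emptyset\ne\mathcal{T}\subseteq[K_T]}\sum_{\mathcal{R}\subseteq[K_R]}a_{n,\mathcal{T},\mathcal{R}}=F$ for all $n$ (every packet is cached by at least one transmitter); $\sum_{n}\sum_{\mathcal{R}}\sum_{\mathcal{T}\ni i}a_{n,\mathcal{T},\mathcal{R}}\le M_TF$ for all $i\in[K_T]$; $\sum_n\sum_{\emptyset\ne\mathcal{T}}\sum_{\mathcal{R}\ni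 j}a_{n,\mathcal{T},\mathcal{R}}\le M_RF$ for all $j\in[K_R]$; $a_{n,\mathcal{T},\mathcal{R}}\ge0$. Feasibility: a set $\mathcal{D}$ of $L$ requested packets, to be sent in one block to $L$ distinct receivers, is feasible if $L\le\min_{l}(|\mathcal{T}_l|+|\mathcal{R}_l|)$, where $\mathcal{T}_l,\mathcal{R}_l$ are the sets of transmitters and receivers caching the $l$-th packet. (P1): for a caching realization and a demand vector $\mathbf{d}=(d_1,\dots,d_{K_R})$ (receiver $\text{Rx}_j$ requests $W_{d_j}$), $H^*(\{\mathcal{P}_i\},\{\mathcal{Q}_j\},\mathbf{d})$ is the minimum $H$ such that there exist feasible sets $\mathcal{D}_1,\dots,\mathcal{D}_H$ with $\bigcup_{m=1}^H\mathcal{D}_m=\bigcup_{j=1}^{K_R}(W_{d_j}\setminus\mathcal{Q}_j)$. $\mathcal{P}_{N,K_R}$ is the set of demand vectors with pairwise distinct entries, of cardinality $\pi(N,K_R)=\frac{N!}{(N-K_R)!}$. *)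

theory Defs
  imports Complex_Main
begin

text \<open>Packets are pairs (n, f): packet f (f < F) of file n (n < N).
  A caching realization is P :: nat \<Rightarrow> packet set (transmitter caches),
  Q :: nat \<Rightarrow> packet set (receiver caches).\<close>

type_synonym packet = "nat \<times> nat"

definition pfile :: "nat \<Rightarrow> nat \<Rightarrow> packet set" where
  "pfile F n = {n} \<times> {..<F}"

definition library :: "nat \<Rightarrow> nat \<Rightarrow> packet set" where
  "library N F = {..<N} \<times> {..<F}"

definition caching_realization ::
  "nat \<Rightarrow> nat \<Rightarrow> nat \<Rightarrow> nat \<Rightarrow> real \<Rightarrow> real \<Rightarrow>
   (nat \<Rightarrow> packet set) \<Rightarrow> (nat \<Rightarrow> packet set) \<Rightarrow> bool" where
  "caching_realization KT KR N F MT MR P Q \<longleftrightarrow>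
     (\<forall>i<KT. P i \<subseteq> library N F) \<and> (\<forall>j<KR. Q j \<subseteq> library N F) \<and>
     (\<forall>w\<in>library N F. \<exists>i<KT. w \<in> P i) \<and>
     (\<forall>i<KT. real (card (P i)) \<le> MT * real F) \<and>
     (\<forall>j<KR. real (card (Q j)) \<le> MR * real F)"

definition tx_set :: "nat \<Rightarrow> (nat \<Rightarrow> packet set) \<Rightarrow> packet \<Rightarrow> nat set" where
  "tx_set KT P w = {i. i < KT \<and> w \<in> P i}"

definition rx_set :: "nat \<Rightarrow> (nat \<Rightarrow> packet set) \<Rightarrow> packet \<Rightarrow> nat set" where
  "rx_set KR Q w = {j. j < KR \<and> w \<in> Q j}"

text \<open>A block D is a set of pairs (j, w): requested packet w is sent to receiver j.\<close>
definition feasible ::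
  "nat \<Rightarrow> nat \<Rightarrow> nat \<Rightarrow> (nat \<Rightarrow> packet set) \<Rightarrow> (nat \<Rightarrow> packet set) \<Rightarrow> nat list
   \<Rightarrow> (nat \<times> packet) set \<Rightarrow> bool" where
  "feasible KT KR F P Q d D \<longleftrightarrow>
     finite D \<and>
     (\<forall>(j, w)\<in>D. j < KR \<and> w \<in> pfile F (d ! j) - Q j) \<and>
     inj_on fst D \<and>
     (\<forall>(j, w)\<in>D. card D \<le> card (tx_set KT P w) + card (rx_set KR Q w))"

definition requested :: "nat \<Rightarrow> nat \<Rightarrow> (nat \<Rightarrow> packet set) \<Rightarrow> nat list \<Rightarrow> packet set" where
  "requested KR F Q d = (\<Union>j<KR. pfile F (d ! j) - Q j)"

definition Hstar ::
  "nat \<Rightarrow> nat \<Rightarrow> nat \<Rightarrow> (nat \<Rightarrow> packet set) \<Rightarrow> (nat \<Rightarrow> packet set) \<Rightarrow> nat list \<Rightarrow> nat" where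
  "Hstar KT KR F P Q d = (LEAST H. \<exists>Ds. length Ds = H \<and>
      (\<forall>D\<in>set Ds. feasible KT KR F P Q d D) \<and>
      (\<Union>D\<in>set Ds. snd ` D) = requested KR F Q d)"

definition distinct_demands :: "nat \<Rightarrow> nat \<Rightarrow> nat list set" where
  "distinct_demands N KR = {d. length d = KR \<and> distinct d \<and> set d \<subseteq> {..<N}}"

definition npi :: "nat \<Rightarrow> nat \<Rightarrow> real" where
  "npi N KR = fact N / fact (N - KR)"

end

theory Submission
  imports Defs
begin

definition sw :: "nat \<Rightarrow> nat \<Rightarrow> nat \<Rightarrow> nat" where
  "sw a b x = (if x = a then b else if x = b then a else x)"

lemma sw_sw[simp]: "sw a b (sw a b x) = x" by (simp add: sw_def)
lemma sw_inj: "inj (sw a b)" by (metis injI sw_sw)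
lemma sw_lt: "a < N \<Longrightarrow> b < N \<Longrightarrow> x < N \<Longrightarrow> sw a b x < N" by (simp add: sw_def)
lemma sw_a[simp]: "sw a b a = b" by (simp add: sw_def)

lemma finite_DD: "finite (distinct_demands N KR)"
  unfolding distinct_demands_def
  by (rule finite_subset[OF _ finite_lists_length_eq[of "{..<N}" KR]]) auto

lemma card_DD:
  assumes "KR \<le> N"
  shows "real (card (distinct_demands N KR)) = npi N KR"
proof -
  have "card (distinct_demands N KR) = \<Prod>{N - KR + 1 .. N}"
    using card_lists_distinct_length_eq[of "{..<N}" KR] assms
    by (simp add: distinct_demands_def conj_commute)
  also have "\<dots> = fact N div fact (N - KR)"
    by (rule fact_div_fact[of "N - KR" N, OF diff_le_self, symmetric])
  finally have c: "card (distinct_demands N KR) = fact N div fact (N - KR)" .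
  have "real (fact N div fact (N - KR) :: nat) = real (fact N :: nat) / real (fact (N - KR) :: nat)"
    by (rule real_of_nat_div[OF fact_dvd[OF diff_le_self]])
  then show ?thesis unfolding npi_def c of_nat_fact .
qed

lemma count_le:
  assumes "n < N" "n' < N" "j < KR"
  shows "card {d \<in> distinct_demands N KR. d ! j = n} \<le> card {d \<in> distinct_demands N KR. d ! j = n'}"
proof (rule card_inj_on_le[where f = "map (sw n n')"])
  show "inj_on (map (sw n n')) {d \<in> distinct_demands N KR. d ! j = n}"
  proof (rule inj_onI)
    fix x y assume "map (sw n n') x = map (sw n n') y"
    then show "x = y" by (rule map_injective[OF _ sw_inj])
  qed
  show "map (sw n n') ` {d \<in> distinct_demands N KR. d ! j = n} \<subseteq> {d \<in> distinct_demands N KR. d ! j = n'}"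
  proof
    fix e assume "e \<in> map (sw n n') ` {d \<in> distinct_demands N KR. d ! j = n}"
    then obtain d where e: "e = map (sw n n') d" and d: "d \<in> distinct_demands N KR" and dj: "d ! j = n" by blast
    have len: "length d = KR" and dd: "distinct d" and sd: "set d \<subseteq> {..<N}"
      using d unfolding distinct_demands_def by blast+
    have "length e = KR" using len e by simp
    moreover have "distinct e" unfolding e distinct_map using dd inj_on_subset[OF sw_inj subset_UNIV] by blast
    moreover have "set e \<subseteq> {..<N}"
    proof
      fix x assume "x \<in> set e"
      then obtain y where "y \<in> set d" "x = sw n n' y" unfolding e by auto
      then show "x \<in> {..<N}" using sd assms(1,2) sw_lt[of n N n' y] by auto
    qed
    moreover have "e ! j = n'" unfolding e using len assms(3) dj by simp
    ultimately show "e \<in> {d \<in> distinct_demands N KR. d ! j = n'}"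
      unfolding distinct_demands_def by blast
  qed
  show "finite {d \<in> distinct_demands N KR. d ! j = n'}" using finite_DD by simp
qed

lemma dj:
  assumes "d \<in> distinct_demands N KR" "j < KR"
  shows "d ! j < N"
proof -
  have "d ! j \<in> set d" using assms by (simp add: distinct_demands_def)
    then have "d ! j \<in> {..<N}" using assms(1) unfolding distinct_demands_def by blast
  then show ?thesis by simp
qed

lemma avg:
  fixes f :: "nat \<Rightarrow> real"
  assumes "j < KR" "KR \<le> N"
  shows "(\<Sum>d\<in>distinct_demands N KR. f (d ! j)) = real (card (distinct_demands N KR)) / real N * (\<Sum>n<N. f n)"
proof -
  let ?DD = "distinct_demands N KR"
  let ?c = "\<lambda>n. card {d \<in> ?DD. d ! j = n}"
  have N: "N > 0" using assms by simp
  have img: "(\<lambda>d. d ! j) ` ?DD \<subseteq> {..<N}"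
    using dj[of _ N KR j] assms(1) by blast
  define c0 where "c0 = ?c 0"
  have c: "?c n = c0" if n: "n < N" for n
    using count_le[of n N 0 j KR] count_le[of 0 N n j KR] assms(1) N n unfolding c0_def by linarith
  have g1: "(\<Sum>d\<in>?DD. f (d ! j)) = (\<Sum>n<N. \<Sum>d\<in>{d. d \<in> ?DD \<and> d ! j = n}. f (d ! j))"
    using sum.group[OF finite_DD finite_lessThan img, of "\<lambda>d. f (d ! j)"] by (rule sym)
  have g2: "(\<Sum>d\<in>{d. d \<in> ?DD \<and> d ! j = n}. f (d ! j)) = real (?c n) * f n" for n
  proof -
    have "(\<Sum>d\<in>{d. d \<in> ?DD \<and> d ! j = n}. f (d ! j)) = (\<Sum>d\<in>{d. d \<in> ?DD \<and> d ! j = n}. f n)"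
      by (rule sum.cong) auto
    then show ?thesis by simp
  qed
  have 1: "(\<Sum>d\<in>?DD. f (d ! j)) = real c0 * (\<Sum>n<N. f n)"
    unfolding g1 g2 using c by (simp add: sum_distrib_left)
  have "card ?DD = (\<Sum>n<N. card {d. d \<in> ?DD \<and> d ! j = n})"
    using sum.group[OF finite_DD finite_lessThan img, of "\<lambda>_. 1::nat"] by simp
  also have "\<dots> = N * c0" using c by simp
  finally show ?thesis using 1 N by simp
qed


definition gw :: "nat \<Rightarrow> nat \<Rightarrow> (nat \<Rightarrow> packet set) \<Rightarrow> (nat \<Rightarrow> packet set) \<Rightarrow> packet \<Rightarrow> real" where
  "gw KT KR P Q w = 1 / real (card (tx_set KT P w) + card (rx_set KR Q w))"

lemma gw_nn: "gw KT KR P Q w \<ge> 0" by (simp add: gw_def)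

lemma block_le:
  assumes "feasible KT KR F P Q d D"
  shows "(\<Sum>w\<in>snd ` D. gw KT KR P Q w) \<le> 1"
proof (cases "D = {}")
  case True then show ?thesis by simp
next
  case False
  have fin: "finite D" using assms by (simp add: feasible_def)
  then have cD: "card D > 0" using False by (simp add: card_gt_0_iff)
  have "\<And>w. w \<in> snd ` D \<Longrightarrow> gw KT KR P Q w \<le> 1 / real (card D)"
  proof -
    fix w assume "w \<in> snd ` D"
    then obtain j where "(j, w) \<in> D" by force
    then have "card D \<le> card (tx_set KT P w) + card (rx_set KR Q w)"
      using assms unfolding feasible_def by blast
    then show "gw KT KR P Q w \<le> 1 / real (card D)"
      unfolding gw_def using cD by (auto intro!: divide_left_mono)
  qed
  then have "(\<Sum>w\<in>snd ` D. gw KT KR P Q w) \<le> real (card (snd ` D)) * (1 / real (card D))"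
    by (rule sum_bounded_above)
  also have "\<dots> \<le> real (card D) * (1 / real (card D))"
    using card_image_le[OF fin, of snd] by (intro mult_right_mono) auto
  also have "\<dots> = 1" using cD by simp
  finally show ?thesis .
qed

lemma cover_le:
  assumes "\<forall>D\<in>set Ds. feasible KT KR F P Q d D"
  shows "(\<Sum>w\<in>(\<Union>D\<in>set Ds. snd ` D). gw KT KR P Q w) \<le> real (length Ds)"
  using assms
proof (induction Ds)
  case Nil then show ?case by simp
next
  case (Cons D Ds)
  let ?g = "gw KT KR P Q"
  let ?R = "\<Union>D\<in>set Ds. snd ` D"
  have fD: "finite (snd ` D)" using Cons.prems by (simp add: feasible_def)
  have fR: "finite ?R" using Cons.prems by (auto simp: feasible_def)
  have i: "sum ?g (snd ` D \<inter> ?R) \<ge> 0" by (rule sum_nonneg) (simp add: gw_nn)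
  have "sum ?g (\<Union>D\<in>set (D#Ds). snd ` D) = sum ?g (snd ` D \<union> ?R)" by simp
  also have "\<dots> \<le> sum ?g (snd ` D) + sum ?g ?R"
    using sum_Un[OF fD fR, of ?g] i by simp
  also have "\<dots> \<le> 1 + real (length Ds)"
    using block_le[of KT KR F P Q d D] Cons by simp
  finally show ?case by simp
qed

lemma H_lower:
  assumes cr: "caching_realization KT KR N F MT MR P Q"
    and d: "d \<in> distinct_demands N KR"
  shows "(\<Sum>w\<in>requested KR F Q d. gw KT KR P Q w) \<le> real (Hstar KT KR F P Q d)"
proof -
  let ?S = "{(j, w). j < KR \<and> w \<in> pfile F (d ! j) - Q j}"
  have fS: "finite ?S"
    by (rule finite_subset[of _ "{..<KR} \<times> ({..<N} \<times> {..<F})"]) (use dj[OF d] in \<open>auto simp: pfile_def\<close>)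
  obtain l where l: "set l = ?S" using finite_list[OF fS] by blast
  let ?Ds = "map (\<lambda>p. {p}) l"
  have feas: "\<forall>D\<in>set ?Ds. feasible KT KR F P Q d D"
  proof
    fix D assume "D \<in> set ?Ds"
    then obtain j w where D: "D = {(j,w)}" and jw: "j < KR" "w \<in> pfile F (d ! j) - Q j" using l by auto
    have "w \<in> library N F" using jw dj[OF d] by (auto simp: pfile_def library_def)
    then obtain i where "i < KT" "w \<in> P i" using cr by (auto simp: caching_realization_def)
    then have "tx_set KT P w \<noteq> {}" "finite (tx_set KT P w)" by (auto simp: tx_set_def)
    then have "card (tx_set KT P w) \<ge> 1" by (simp add: Suc_le_eq card_gt_0_iff)
    then show "feasible KT KR F P Q d D" using jw unfolding D feasible_def by auto
  qed
  have cov: "(\<Union>D\<in>set ?Ds. snd ` D) = requested KR F Q d" using l by (auto simp: requested_def)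
  have "\<exists>H Ds. length Ds = H \<and> (\<forall>D\<in>set Ds. feasible KT KR F P Q d D) \<and>
      (\<Union>D\<in>set Ds. snd ` D) = requested KR F Q d" using feas cov by blast
  then have "\<exists>Ds. length Ds = Hstar KT KR F P Q d \<and> (\<forall>D\<in>set Ds. feasible KT KR F P Q d D) \<and>
      (\<Union>D\<in>set Ds. snd ` D) = requested KR F Q d"
    unfolding Hstar_def by (rule LeastI_ex)
  then obtain Ds where "length Ds = Hstar KT KR F P Q d" "\<forall>D\<in>set Ds. feasible KT KR F P Q d D"
      "(\<Union>D\<in>set Ds. snd ` D) = requested KR F Q d" by blast
  then show ?thesis using cover_le[of Ds KT KR F P Q d] by simp
qed

lemma req_sum:
  fixes g :: "packet \<Rightarrow> real"
  assumes d: "d \<in> distinct_demands N KR"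
  shows "(\<Sum>w\<in>requested KR F Q d. g w) = (\<Sum>j<KR. \<Sum>w\<in>pfile F (d ! j) - Q j. g w)"
  unfolding requested_def
proof (rule sum.UNION_disjoint)
  show "finite {..<KR}" by simp
  show "\<forall>j\<in>{..<KR}. finite (pfile F (d ! j) - Q j)" by (simp add: pfile_def)
  show "\<forall>i\<in>{..<KR}. \<forall>j\<in>{..<KR}. i \<noteq> j \<longrightarrow> (pfile F (d!i) - Q i) \<inter> (pfile F (d!j) - Q j) = {}"
    using d by (auto simp: pfile_def distinct_demands_def nth_eq_iff_index_eq)
qed

lemma pfile_sum:
  fixes g :: "packet \<Rightarrow> real"
  shows "(\<Sum>w\<in>pfile F n - Q. g w) = (\<Sum>f<F. if (n,f) \<in> Q then 0 else g (n,f))"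
proof -
  have "pfile F n - Q = (\<lambda>f. (n,f)) ` {f \<in> {..<F}. (n,f) \<notin> Q}" by (auto simp: pfile_def)
  then have "sum g (pfile F n - Q) = (\<Sum>f\<in>{f \<in> {..<F}. (n,f) \<notin> Q}. g (n,f))"
    by (simp add: sum.reindex inj_on_def)
  also have "\<dots> = (\<Sum>f<F. if (n,f) \<in> Q then 0 else g (n,f))"
    using sum.inter_filter[of "{..<F}" "\<lambda>f. g (n,f)" "\<lambda>f. (n,f) \<notin> Q"] by simp (smt (verit, best) sum.cong)
  finally show ?thesis .
qed

lemma rr_sum: "real (card (rx_set KR Q w)) = (\<Sum>j<KR. if w \<in> Q j then 1 else 0)"
proof -
  have "rx_set KR Q w = {j \<in> {..<KR}. w \<in> Q j}" by (auto simp: rx_set_def)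
  then show ?thesis using sum.inter_filter[of "{..<KR}" "\<lambda>_. 1::real" "\<lambda>j. w \<in> Q j"] by simp
qed

lemma tt_sum: "real (card (tx_set KT P w)) = (\<Sum>i<KT. if w \<in> P i then 1 else 0)"
proof -
  have "tx_set KT P w = {j \<in> {..<KT}. w \<in> P j}" by (auto simp: tx_set_def)
  then show ?thesis using sum.inter_filter[of "{..<KT}" "\<lambda>_. 1::real" "\<lambda>j. w \<in> P j"] by simp
qed

lemma mem_sum:
  assumes "\<forall>j<K. Q j \<subseteq> L" "\<forall>j<K. real (card (Q j)) \<le> M * real F" "finite L"
  shows "(\<Sum>w\<in>L. \<Sum>j<K. if w \<in> Q j then 1 else 0) \<le> real K * M * real F"
proof -
  have "(\<Sum>w\<in>L. \<Sum>j<K. if w \<in> Q j then 1 else 0) = (\<Sum>j<K. \<Sum>w\<in>L. if w \<in> Q j then (1::real) else 0)"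
    by (rule sum.swap)
  also have "\<dots> \<le> (\<Sum>j<K. M * real F)"
  proof (rule sum_mono)
    fix j assume j: "j \<in> {..<K}"
    have "(\<Sum>w\<in>L. if w \<in> Q j then (1::real) else 0) = real (card {w \<in> L. w \<in> Q j})"
      using sum.inter_filter[of L "\<lambda>_. 1::real" "\<lambda>w. w \<in> Q j"] assms by simp
    also have "\<dots> \<le> real (card (Q j))"
      using assms j by (intro of_nat_mono card_mono) (auto intro: finite_subset)
    also have "\<dots> \<le> M * real F" using assms j by auto
    finally show "(\<Sum>w\<in>L. if w \<in> Q j then (1::real) else 0) \<le> M * real F" .
  qed
  also have "\<dots> = real K * M * real F" by simp
  finally show ?thesis .
qed

lemma cart: "(\<Sum>n<N. \<Sum>f<F. (\<phi> (n,f)::real)) = (\<Sum>w\<in>library N F. \<phi> w)"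
  by (simp add: library_def sum.cartesian_product)

lemma pointwise:
  fixes c s KR lam :: real
  assumes "0 \<le> c" "c \<le> KR" "s \<ge> 1" "lam \<ge> 0"
  shows "c * (1 / s) \<ge> 2 * lam * c - lam^2 * KR * s"
proof -
  have s: "s > 0" using assms by simp
  have "c * (1 - lam * s)^2 \<ge> 0" using assms by simp
  moreover have "lam^2 * c * s^2 \<le> lam^2 * KR * s^2" using assms by (intro mult_right_mono mult_left_mono) auto
  ultimately have "c \<ge> (2 * lam * c - lam^2 * KR * s) * s"
    by (simp add: power2_eq_square algebra_simps)
  then show ?thesis using s by (simp add: field_simps)
qed


lemma inner_sum:
  "(\<Sum>j<K. if w \<in> Q j then 0 else (x::real)) = (real K - (\<Sum>j<K. if w \<in> Q j then 1 else 0)) * x"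
  by (induction K) (auto simp: algebra_simps)

lemma final_alg:
  fixes KR N F D MR V :: real
  assumes "N > 0" "D > 0"
    and "V \<ge> 2*((N-MR)/D)*(KR*F*(N-MR)) - ((N-MR)/D)^2*(KR*F*D)"
  shows "KR*N*F*(1-MR/N)^2/D \<le> V/N"
proof -
  have e1: "2*((N-MR)/D)*(KR*F*(N-MR)) - ((N-MR)/D)^2*(KR*F*D) = KR*F*(N-MR)^2/D"
    using assms by (simp add: field_simps power2_eq_square)
  have e2: "KR*N*F*(1-MR/N)^2/D = (KR*F*(N-MR)^2/D)/N"
    using assms by (simp add: field_simps power2_eq_square)
  show ?thesis unfolding e2 using assms e1 by (intro divide_right_mono) auto
qed

theorem lemma4:
  fixes KT KR N F :: nat and MT MR :: real
    and P Q :: "nat \<Rightarrow> packet set"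
  assumes "KT \<ge> 1" and "KR \<ge> 1" and "F \<ge> 1" and "N \<ge> KR"
    and "0 \<le> MT" and "0 \<le> MR" and "MR \<le> real N"
    and "caching_realization KT KR N F MT MR P Q"
  shows "real KR * real N * real F * (1 - MR / real N)^2 / (real KT * MT + real KR * MR)
           \<le> (1 / npi N KR) * (\<Sum>d\<in>distinct_demands N KR. real (Hstar KT KR F P Q d))"
proof -
  let ?DD = "distinct_demands N KR"
  let ?g = "gw KT KR P Q"
  let ?L = "library N F"
  let ?rr = "\<lambda>w. real (card (rx_set KR Q w))"
  let ?tt = "\<lambda>w. real (card (tx_set KT P w))"
  define K where "K = real (card ?DD)"
  have KN: "K = npi N KR" using card_DD assms(4) K_def by simp
  have N: "N > 0" using assms by simp
  have Kpos: "K > 0" by (simp add: KN npi_def)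
  have Psub: "\<forall>i<KT. P i \<subseteq> ?L" and Qsub: "\<forall>j<KR. Q j \<subseteq> ?L"
    and cov: "\<forall>w\<in>?L. \<exists>i<KT. w \<in> P i"
    and Pm: "\<forall>i<KT. real (card (P i)) \<le> MT * real F"
    and Qm: "\<forall>j<KR. real (card (Q j)) \<le> MR * real F"
    using assms(8) unfolding caching_realization_def by blast+
  have finL: "finite ?L" by (simp add: library_def)
  have cardL: "card ?L = N * F" by (simp add: library_def card_cartesian_product)
  define h where "h j n = (\<Sum>w\<in>pfile F n - Q j. ?g w)" for j n
  have A: "(\<Sum>d\<in>?DD. \<Sum>j<KR. h j (d!j)) \<le> (\<Sum>d\<in>?DD. real (Hstar KT KR F P Q d))"
  proof (rule sum_mono)
    fix d assume d: "d \<in> ?DD"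
    show "(\<Sum>j<KR. h j (d!j)) \<le> real (Hstar KT KR F P Q d)"
      using H_lower[OF assms(8) d] req_sum[OF d, of ?g F Q] unfolding h_def by simp
  qed
  have B: "(\<Sum>d\<in>?DD. \<Sum>j<KR. h j (d!j)) = K / N * (\<Sum>j<KR. \<Sum>n<N. h j n)"
  proof -
    have "(\<Sum>d\<in>?DD. \<Sum>j<KR. h j (d!j)) = (\<Sum>j<KR. \<Sum>d\<in>?DD. h j (d!j))" by (rule sum.swap)
    also have "\<dots> = (\<Sum>j<KR. K / N * (\<Sum>n<N. h j n))"
      using avg[of _ KR N] assms(4) K_def by (intro sum.cong) auto
    also have "\<dots> = K / N * (\<Sum>j<KR. \<Sum>n<N. h j n)" by (simp add: sum_distrib_left)
    finally show ?thesis .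
  qed
  define V where "V = (\<Sum>w\<in>?L. (real KR - ?rr w) * ?g w)"
  have C: "(\<Sum>j<KR. \<Sum>n<N. h j n) = V"
  proof -
    have "(\<Sum>j<KR. \<Sum>n<N. h j n) = (\<Sum>j<KR. \<Sum>n<N. \<Sum>f<F. if (n,f) \<in> Q j then 0 else ?g (n,f))"
      by (simp add: h_def pfile_sum)
    also have "\<dots> = (\<Sum>n<N. \<Sum>j<KR. \<Sum>f<F. if (n,f) \<in> Q j then 0 else ?g (n,f))"
      by (rule sum.swap)
    also have "\<dots> = (\<Sum>n<N. \<Sum>f<F. \<Sum>j<KR. if (n,f) \<in> Q j then 0 else ?g (n,f))"
      by (rule sum.cong[OF refl], rule sum.swap)
    also have "\<dots> = (\<Sum>n<N. \<Sum>f<F. (real KR - ?rr (n,f)) * ?g (n,f))"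
      by (simp add: inner_sum rr_sum)
    also have "\<dots> = V" unfolding V_def by (rule cart)
    finally show ?thesis .
  qed
  have rr_le: "\<And>w. ?rr w \<le> real KR"
  proof -
    fix w
    have "card (rx_set KR Q w) \<le> card {..<KR}" by (rule card_mono) (auto simp: rx_set_def)
    then show "?rr w \<le> real KR" by simp
  qed
  have tt_ge: "\<And>w. w \<in> ?L \<Longrightarrow> ?tt w \<ge> 1"
  proof -
    fix w assume "w \<in> ?L"
    then obtain i where "i < KT" "w \<in> P i" using cov by blast
    then have "tx_set KT P w \<noteq> {}" "finite (tx_set KT P w)" by (auto simp: tx_set_def)
    then have "card (tx_set KT P w) \<ge> 1" by (simp add: Suc_le_eq card_gt_0_iff)
    then show "?tt w \<ge> 1" by simp
  qed
  have sr: "(\<Sum>w\<in>?L. ?rr w) \<le> real KR * MR * real F"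
    using mem_sum[of KR Q ?L MR F] rr_sum Qsub Qm finL by simp
  have st: "(\<Sum>w\<in>?L. ?tt w) \<le> real KT * MT * real F"
    using mem_sum[of KT P ?L MT F] tt_sum Psub Pm finL by simp
  have MTpos: "MT > 0"
  proof -
    have "(0,0) \<in> ?L" using N assms(3) by (simp add: library_def)
    then obtain i where i: "i < KT" "(0,0) \<in> P i" using cov by blast
    have "finite (P i)" using Psub i finL by (meson finite_subset)
    then have "card (P i) \<ge> 1" using i by (metis One_nat_def Suc_leI card_gt_0_iff empty_iff)
    then have "1 \<le> MT * real F" using Pm i by (metis dual_order.trans of_nat_1 of_nat_le_iff)
    then show ?thesis using assms(3) assms(5) by (smt (verit) mult_nonpos_nonneg of_nat_0_le_iff)
  qed
  define D where "D = real KT * MT + real KR * MR"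
  have Dpos: "D > 0" unfolding D_def using MTpos assms(1,6) by (smt (verit) mult_nonneg_nonneg of_nat_0_le_iff of_nat_1 of_nat_mono mult_pos_pos)
  define lam where "lam = (real N - MR) / D"
  have lam: "lam \<ge> 0" unfolding lam_def using Dpos assms(7) by simp
  have pw: "\<And>w. w \<in> ?L \<Longrightarrow> (real KR - ?rr w) * ?g w \<ge> 2*lam*(real KR - ?rr w) - lam^2 * real KR * (?tt w + ?rr w)"
  proof -
    fix w assume w: "w \<in> ?L"
    have "?g w = 1 / (?tt w + ?rr w)" by (simp add: gw_def)
    moreover have "(real KR - ?rr w) * (1 / (?tt w + ?rr w)) \<ge> 2*lam*(real KR - ?rr w) - lam^2 * real KR * (?tt w + ?rr w)"
      by (rule pointwise) (use rr_le[of w] tt_ge[OF w] lam in auto)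
    ultimately show "(real KR - ?rr w) * ?g w \<ge> 2*lam*(real KR - ?rr w) - lam^2 * real KR * (?tt w + ?rr w)" by simp
  qed
  have "V \<ge> (\<Sum>w\<in>?L. 2*lam*(real KR - ?rr w) - lam^2 * real KR * (?tt w + ?rr w))"
    unfolding V_def by (rule sum_mono) (rule pw)
  also have "(\<Sum>w\<in>?L. 2*lam*(real KR - ?rr w) - lam^2 * real KR * (?tt w + ?rr w))
      = 2*lam*real KR*real (card ?L) - 2*lam*(\<Sum>w\<in>?L. ?rr w) - lam^2 * real KR * (\<Sum>w\<in>?L. ?tt w) - lam^2 * real KR * (\<Sum>w\<in>?L. ?rr w)"
    by (simp add: sum_subtractf sum.distrib sum_distrib_left[symmetric] algebra_simps)
  finally have V1: "V \<ge> 2*lam*real KR*real (card ?L) - 2*lam*(\<Sum>w\<in>?L. ?rr w) - lam^2 * real KR * (\<Sum>w\<in>?L. ?tt w) - lam^2 * real KR * (\<Sum>w\<in>?L. ?rr w)" .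
  have b1: "2*lam*(\<Sum>w\<in>?L. ?rr w) \<le> 2*lam*(real KR * MR * real F)" using sr lam by (intro mult_left_mono) auto
  have b2: "lam^2 * real KR * (\<Sum>w\<in>?L. ?tt w) \<le> lam^2 * real KR * (real KT * MT * real F)" using st by (intro mult_left_mono) auto
  have b3: "lam^2 * real KR * (\<Sum>w\<in>?L. ?rr w) \<le> lam^2 * real KR * (real KR * MR * real F)" using sr by (intro mult_left_mono) auto
  have V2: "V \<ge> 2*lam*(real KR*real F*(real N - MR)) - lam^2*(real KR*real F*D)"
  proof -
    have "V \<ge> 2*lam*real KR*real (N*F) - 2*lam*(real KR * MR * real F) - lam^2 * real KR * (real KT * MT * real F) - lam^2 * real KR * (real KR * MR * real F)"
      using V1[unfolded cardL] b1 b2 b3 by linarith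
    then show ?thesis unfolding D_def by (simp add: algebra_simps)
  qed
  have fin: "real KR * real N * real F * (1 - MR / real N)^2 / D \<le> V / real N"
    using final_alg[where KR="real KR" and N="real N" and F="real F" and D=D and MR=MR and V=V] V2 N Dpos unfolding lam_def by simp
  have "V / real N = (1 / K) * (K / N * V)" using Kpos by simp
  also have "\<dots> \<le> (1 / K) * (\<Sum>d\<in>?DD. real (Hstar KT KR F P Q d))"
    using A B C Kpos by (intro mult_left_mono) auto
  finally show ?thesis using fin KN unfolding D_def by simp
qed

end
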